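(* Let $N=pq$ with $p\neq q$ odd primes, and write $\left(\frac{\cdot}{N}\right)$ for the Jacobi symbol modulo $N$. Let $\mu\in\mathsf{J}(N)\setminus\mathsf{QR}(N)$ and $R_1,R_2\in\mathsf{J}(N)$. Let $\alpha_1,\alpha_2$ be integers such that $\mu^{\alpha_1}R_1\in\mathsf{QR}(N)$ and $\mu^{\alpha_2}R_2\in\mathsf{QR}(N)$. Let $\rho_1\in\mathbb{Z}_N$ be a square root of $\mu^{\alpha_1}R_1$ modulo $N$. Let $s_1,s_2\in\mathbb{Z}_N^{\times}$ and set $S_1=s_1^2 \bmod N$, $S_2=s_2^2\bmod N$. Fix an integer $i\ge 1$. Let $(x_i,y_i)$ and $(x_{i+1},y_{i+1})$ be elements of $\mathbb{Z}_N^2$ satisfying \[ \mu^{\alpha_1}R_1 S_1^{2i+1} x_i^2 + \mu^{\alpha_2}R_2 S_2^{2i+1}y_i^2 = 1 \bmod N, \qquad \mu^{\alpha_1}R_1 S_1^{2i+3} x_{i+1}^2 + \mu^{\alpha_2}R_2 S_2^{2i+3}y_{i+1}^2 = 1 \bmod N. \] Define \[ k_i=\left(\frac{1+x_i s_1^{2i+1}\rho_1}{N}\right),\qquad k_{i+1}=\left(\frac{1+x_{i+1} s_1^{2i+3}\rho_1}{N}\right), \qquad D = 1 + \mu^{\alpha_1}R_1 S_1^{2i+2} x_i x_{i+1}, \] and assume $D\in\mathbb{Z}_N^{\times}$. Set \[ x_* = \frac{x_i + S_1 x_{i+1}}{D},\qquad y_* = \frac{y_i y_{i+1}}{D}\quad(\text{in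 } \mathbb{Z}_N), \] so that $(x_*,y_* )$ is a solution of \[ \mu^{\alpha_1}R_1 S_1^{2i+1} x_*^2 + \mu^{2\alpha_2}R_2^2 S_2^{4i+4}y_*^2 = 1 \bmod N. \] Assume moreover that $1+x_i s_1^{2i+1}\rho_1$, $1+x_{i+1} s_1^{2i+3}\rho_1$ and $2 + 2y_* \mu^{\alpha_2}R_2 S_2^{2i+2}$ are units of $\mathbb{Z}_N$. Then \[ k_{i+1}= k_i \cdot \left(\frac{D}{N}\right)\cdot\left(\frac{2 + 2y_* \mu^{\alpha_2}R_2 S_2^{2i+2}}{N}\right). \]
   Context: $\mathbb{Z}_N^{\times}$ is the multiplicative group of units modulo $N$. $\mathsf{QR}(N)=\{y\in\mathbb{Z}_N^\times : \exists x\in\mathbb{Z}_N^\times,\ y=x^2 \bmod N\}$ is the set of quadratic residues, and $\mathsf{J}(N)$ is the set of elements of $\mathbb{Z}_N$ whose Jacobi symbol modulo $N$ equals $1$. In the paper's setting (the Elashry–Mu–Susilo key exchange), $R_j=\mathcal{H}(\mathrm{id}_j)$ are hashed identities, $(\mu^{\alpha_j},S_j)$ are the publicly exchanged values of party $P_j$, and $k_i$, $k_{i+1}$ are the $i$-th and $(i+1)$-th bits of the shared secret key. *)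

theory Defs
  imports "HOL-Number_Theory.Number_Theory"
begin

definition Jacobi :: "int \<Rightarrow> int \<Rightarrow> int" where
  "Jacobi a n = (\<Prod>p\<in>prime_factors n. Legendre a p ^ multiplicity p n)"

definition zpow_mod :: "int \<Rightarrow> int \<Rightarrow> int \<Rightarrow> int" where
  "zpow_mod N a k = (if 0 \<le> k then a ^ nat k else modular_inverse N a ^ nat (- k)) mod N"

definition ZN :: "int \<Rightarrow> int set" where
  "ZN N = {0..<N}"

definition ZN_units :: "int \<Rightarrow> int set" where
  "ZN_units N = {y \<in> ZN N. coprime y N}"

definition QR :: "int \<Rightarrow> int set" where
  "QR N = {y \<in> ZN_units N. \<exists>x \<in> ZN_units N. [y = x^2] (mod N)}"

definition JN :: "int \<Rightarrow> int set" where
  "JN N = {y \<in> ZN N. Jacobi y N = 1}"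

end

theory Submission
  imports Defs
begin

lemma jacobi_pq:
  fixes p q :: int
  assumes "prime p" "prime q" "p \<noteq> q"
  shows "Jacobi a (p*q) = Legendre a p * Legendre a q"
proof -
  have p0: "p \<noteq> 0" "q \<noteq> 0" using assms by auto
  have pf: "prime_factors (p*q) = {p,q}"
    using prime_factors_product[OF p0] prime_prime_factors assms by auto
  have ndq: "\<not> p dvd q" using assms
    by (metis prime_gt_0_int zdvd_antisym_nonneg order_less_imp_le primes_dvd_imp_eq)
  have ndp: "\<not> q dvd p" using assms
    by (metis prime_gt_0_int zdvd_antisym_nonneg order_less_imp_le primes_dvd_imp_eq)
  have m1: "multiplicity p (p*q) = 1"
    using prime_elem_multiplicity_mult_distrib[of p p q] assms p0 not_dvd_imp_multiplicity_0[OF ndq]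
      prime_imp_prime_elem[of p] multiplicity_prime[of p]
    by simp
  have m2: "multiplicity q (p*q) = 1"
    using prime_elem_multiplicity_mult_distrib[of q p q] assms p0 not_dvd_imp_multiplicity_0[OF ndp]
      prime_imp_prime_elem[of q] multiplicity_prime[of q]
    by simp
  show ?thesis unfolding Jacobi_def pf using assms m1 m2 by simp
qed

lemma legendre_cong:
  assumes "[a = b] (mod p)"
  shows "Legendre a p = Legendre b p"
proof -
  have "[a = 0] (mod p) \<longleftrightarrow> [b = 0] (mod p)"
    using assms by (meson cong_sym cong_trans)
  moreover have "QuadRes p a \<longleftrightarrow> QuadRes p b"
    unfolding QuadRes_def using assms by (meson cong_sym cong_trans)
  ultimately show ?thesis unfolding Legendre_def by simp
qed

lemma legendre_range: "Legendre a p \<in> {-1,0,1}"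
  unfolding Legendre_def by auto

lemma legendre_nz:
  assumes "\<not> p dvd a"
  shows "Legendre a p = 1 \<or> Legendre a p = -1"
  using assms unfolding Legendre_def by (auto simp: cong_0_iff)

lemma legendre_sq:
  assumes "prime p" "\<not> p dvd x"
  shows "Legendre (x^2) p = 1"
proof -
  have "\<not> p dvd x^2" using assms prime_dvd_power by blast
  then have "\<not> [x^2 = 0] (mod p)" by (simp add: cong_0_iff)
  moreover have "QuadRes p (x^2)" unfolding QuadRes_def by (blast intro: cong_refl)
  ultimately show ?thesis unfolding Legendre_def by simp
qed

lemma legendre_mult:
  fixes p :: int
  assumes "prime p" "2 < p"
  shows "Legendre (a*b) p = Legendre a p * Legendre b p"
proof -
  obtain n where n: "p = int n" using assms prime_ge_0_int nonneg_int_cases by metis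
  have pn: "prime n" "2 < n" using assms n by auto
  have "[Legendre (a*b) p = (a*b)^((n-1) div 2)] (mod p)" using euler_criterion[OF pn] n by simp
  moreover have "[Legendre a p * Legendre b p = a^((n-1) div 2) * b^((n-1) div 2)] (mod p)"
    using euler_criterion[OF pn] n by (intro cong_mult) auto
  ultimately have c: "[Legendre (a*b) p = Legendre a p * Legendre b p] (mod p)"
    by (metis cong_sym cong_trans power_mult_distrib)
  define d where "d = Legendre (a*b) p - Legendre a p * Legendre b p"
  have dd: "p dvd d" using c unfolding d_def by (simp add: cong_iff_dvd_diff)
  have "\<bar>d\<bar> \<le> 2" unfolding d_def using legendre_range[of "a*b" p] legendre_range[of a p]
      legendre_range[of b p] by auto
  then have "d = 0" using dd dvd_imp_le_int[of d p] assms by fastforce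
  then show ?thesis unfolding d_def by simp
qed

lemma sq_pow: "((x::int)^2)^n = (x^n)^2"
  by (metis power_mult mult.commute)

lemma pow_split: "((x::int)^2)^(2*i+2) = x^(2*i+1) * x^(2*i+3)"
proof -
  have "(x^2)^(2*i+2) = x^(2*(2*i+2))" by (rule power_mult[symmetric])
  also have "2*(2*i+2) = (2*i+1) + (2*i+3)" by simp
  finally show ?thesis by (metis power_add)
qed

theorem mainTheorem1:
  fixes p q N \<mu> R1 R2 \<alpha>1 \<alpha>2 \<rho>1 s1 s2 S1 S2 xi yi xi1 yi1 :: int
    and i :: nat
  assumes "prime p" and "prime q" and "odd p" and "odd q" and "p \<noteq> q" and "N = p * q"
    and "\<mu> \<in> JN N - QR N" and "R1 \<in> JN N" and "R2 \<in> JN N"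
    and "zpow_mod N \<mu> \<alpha>1 * R1 mod N \<in> QR N"
    and "zpow_mod N \<mu> \<alpha>2 * R2 mod N \<in> QR N"
    and "\<rho>1 \<in> ZN N" and "[\<rho>1^2 = zpow_mod N \<mu> \<alpha>1 * R1] (mod N)"
    and "s1 \<in> ZN_units N" and "s2 \<in> ZN_units N"
    and "S1 = s1^2 mod N" and "S2 = s2^2 mod N"
    and "i \<ge> 1"
    and "xi \<in> ZN N" and "yi \<in> ZN N" and "xi1 \<in> ZN N" and "yi1 \<in> ZN N"
    and "[zpow_mod N \<mu> \<alpha>1 * R1 * S1^(2*i+1) * xi^2
          + zpow_mod N \<mu> \<alpha>2 * R2 * S2^(2*i+1) * yi^2 = 1] (mod N)"
    and "[zpow_mod N \<mu> \<alpha>1 * R1 * S1^(2*i+3) * xi1^2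
          + zpow_mod N \<mu> \<alpha>2 * R2 * S2^(2*i+3) * yi1^2 = 1] (mod N)"
    and "D = 1 + zpow_mod N \<mu> \<alpha>1 * R1 * S1^(2*i+2) * xi * xi1"
    and "coprime D N"
    and "ystar = yi * yi1 * modular_inverse N D mod N"
    and "coprime (1 + xi * s1^(2*i+1) * \<rho>1) N"
    and "coprime (1 + xi1 * s1^(2*i+3) * \<rho>1) N"
    and "coprime (2 + 2 * ystar * zpow_mod N \<mu> \<alpha>2 * R2 * S2^(2*i+2)) N"
  shows "Jacobi (1 + xi1 * s1^(2*i+3) * \<rho>1) N =
           Jacobi (1 + xi * s1^(2*i+1) * \<rho>1) N * Jacobi D N
           * Jacobi (2 + 2 * ystar * zpow_mod N \<mu> \<alpha>2 * R2 * S2^(2*i+2)) N"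
proof -
  define a where "a = zpow_mod N \<mu> \<alpha>1 * R1"
  define b where "b = zpow_mod N \<mu> \<alpha>2 * R2"
  define m where "m = modular_inverse N D"
  define E where "E = 2 + 2 * ystar * zpow_mod N \<mu> \<alpha>2 * R2 * S2^(2*i+2)"
  define u where "u = xi * s1^(2*i+1) * \<rho>1"
  define v where "v = xi1 * s1^(2*i+3) * \<rho>1"
  define Y where "Y = s2^(2*i+1) * yi"
  define Y' where "Y' = s2^(2*i+3) * yi1"
  define X where "X = (1+u)*(1+v) + b*(Y*Y')"
  have H1: "[a * S1^(2*i+1) * xi^2 + b * S2^(2*i+1) * yi^2 = 1] (mod N)"
    unfolding a_def b_def using assms(23) .
  have H2: "[a * S1^(2*i+3) * xi1^2 + b * S2^(2*i+3) * yi1^2 = 1] (mod N)"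
    unfolding a_def b_def using assms(24) .
  have ha: "[a = \<rho>1^2] (mod N)" unfolding a_def using assms(13) by (rule cong_sym)
  have hS1: "[S1 = s1^2] (mod N)" using assms(16) by (simp add: cong_def)
  have hS2: "[S2 = s2^2] (mod N)" using assms(17) by (simp add: cong_def)
  have hm: "[D * m = 1] (mod N)" unfolding m_def using assms(26) by (rule cong_modular_inverse1)
  have hy: "[ystar = yi * yi1 * m] (mod N)" using assms(27) by (simp add: cong_def m_def)
  have c1: "[a * S1^(2*i+1) * xi^2 + b * S2^(2*i+1) * yi^2
           = \<rho>1^2 * (s1^2)^(2*i+1) * xi^2 + b * (s2^2)^(2*i+1) * yi^2] (mod N)"
    by (intro cong_add cong_mult cong_pow ha hS1 hS2 cong_refl)
  have "\<rho>1^2 * (s1^2)^(2*i+1) * xi^2 + b * (s2^2)^(2*i+1) * yi^2 = u^2 + b*Y^2"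
    unfolding u_def Y_def by (simp add: sq_pow power_mult_distrib algebra_simps)
  with c1 H1 have e1: "[u^2 + b*Y^2 = 1] (mod N)" by (metis cong_sym cong_trans)
  have c2: "[a * S1^(2*i+3) * xi1^2 + b * S2^(2*i+3) * yi1^2
           = \<rho>1^2 * (s1^2)^(2*i+3) * xi1^2 + b * (s2^2)^(2*i+3) * yi1^2] (mod N)"
    by (intro cong_add cong_mult cong_pow ha hS1 hS2 cong_refl)
  have "\<rho>1^2 * (s1^2)^(2*i+3) * xi1^2 + b * (s2^2)^(2*i+3) * yi1^2 = v^2 + b*Y'^2"
    unfolding v_def Y'_def by (simp add: sq_pow power_mult_distrib algebra_simps)
  with c2 H2 have e2: "[v^2 + b*Y'^2 = 1] (mod N)" by (metis cong_sym cong_trans)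
  have cD: "[1 + a * S1^(2*i+2) * xi * xi1 = 1 + \<rho>1^2 * (s1^2)^(2*i+2) * xi * xi1] (mod N)"
    by (intro cong_add cong_mult cong_pow ha hS1 cong_refl)
  have "(s1^2)^(2*i+2) = s1^(2*i+1) * s1^(2*i+3)"
    by (rule pow_split)
  moreover have "\<And>r t t' x y::int. 1 + r^2*(t*t')*x*y = 1 + (x*t*r)*(y*t'*r)"
    by (simp add: power2_eq_square algebra_simps)
  ultimately have "1 + \<rho>1^2 * (s1^2)^(2*i+2) * xi * xi1 = 1 + u*v"
    unfolding u_def v_def by metis
  with cD have eD: "[D = 1 + u*v] (mod N)" using assms(25) a_def by (metis cong_trans cong_refl)
  have DE: "D * E = 2*D + 2*(D*ystar)*b*S2^(2*i+2)"
    unfolding E_def b_def by (simp add: algebra_simps)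
  have hDy: "[D*ystar = yi*yi1] (mod N)"
  proof -
    have "[D*ystar = D*(yi*yi1*m)] (mod N)" by (intro cong_mult cong_refl hy)
    also have "D*(yi*yi1*m) = (D*m)*(yi*yi1)" by (simp add: algebra_simps)
    also have "[(D*m)*(yi*yi1) = 1*(yi*yi1)] (mod N)" by (intro cong_mult cong_refl hm)
    finally show ?thesis by simp
  qed
  have "(s2^2)^(2*i+2) = s2^(2*i+1) * s2^(2*i+3)"
    by (rule pow_split)
  then have hS2': "[S2^(2*i+2) = s2^(2*i+1) * s2^(2*i+3)] (mod N)"
    using cong_pow[OF hS2, of "2*i+2"] by simp
  have "[2*D + 2*(D*ystar)*b*S2^(2*i+2) = 2*(1+u*v) + 2*(yi*yi1)*b*(s2^(2*i+1) * s2^(2*i+3))] (mod N)"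
    by (rule cong_add[OF cong_mult[OF cong_refl eD] cong_mult[OF cong_mult[OF cong_mult[OF cong_refl hDy] cong_refl] hS2']])
  also have "2*(1+u*v) + 2*(yi*yi1)*b*(s2^(2*i+1) * s2^(2*i+3)) = 2*(1+u*v) + 2*b*(Y*Y')"
    unfolding Y_def Y'_def by (simp add: algebra_simps)
  finally have eDE: "[D*E = 2*(1+u*v) + 2*b*(Y*Y')] (mod N)" using DE by simp
  have hP: "[b*Y^2 = 1 - u^2] (mod N)" using cong_diff[OF e1 cong_refl[of "u^2"]] by simp
  have hQ: "[b*Y'^2 = 1 - v^2] (mod N)" using cong_diff[OF e2 cong_refl[of "v^2"]] by simp
  have hPQ: "[(b*Y^2)*(b*Y'^2) = (1-u^2)*(1-v^2)] (mod N)" by (rule cong_mult[OF hP hQ])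
  have "[(1+u)*(1+v)*D*E = (1+u)*(1+v)*(2*(1+u*v) + 2*b*(Y*Y'))] (mod N)"
    using cong_mult[OF cong_refl[of "(1+u)*(1+v)"] eDE] by (simp add: mult.assoc)
  also have "(1+u)*(1+v)*(2*(1+u*v) + 2*b*(Y*Y')) = X^2 - (b*Y^2)*(b*Y'^2) + (1-u^2)*(1-v^2)"
    unfolding X_def by (simp add: power2_eq_square algebra_simps)
  also have "[X^2 - (b*Y^2)*(b*Y'^2) + (1-u^2)*(1-v^2) = X^2 - (1-u^2)*(1-v^2) + (1-u^2)*(1-v^2)] (mod N)"
    by (rule cong_add[OF cong_diff[OF cong_refl hPQ] cong_refl])
  finally have K: "[(1+u)*(1+v)*D*E = X^2] (mod N)" by simp
  have loc: "Legendre (1+v) r = Legendre (1+u) r * Legendre D r * Legendre E r"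
    if r: "prime r" "r dvd N" "2 < r" for r
  proof -
    have nd: "\<not> r dvd x" if "coprime x N" for x
      using that r by (metis coprime_common_divisor coprime_commute not_prime_unit dvd_trans)
    have n1: "\<not> r dvd (1+u)" using nd assms(28) u_def by simp
    have n2: "\<not> r dvd (1+v)" using nd assms(29) v_def by simp
    have n3: "\<not> r dvd D" using nd assms(26) by simp
    have n4: "\<not> r dvd E" using nd assms(30) E_def by simp
    have Kr: "[(1+u)*(1+v)*D*E = X^2] (mod r)" using K r(2) cong_dvd_modulus by blast
    have nX: "\<not> r dvd X"
    proof
      assume "r dvd X"
      then have "r dvd X^2" by (simp add: power2_eq_square)
      then have "r dvd (1+u)*(1+v)*D*E" using Kr cong_dvd_iff by blast
      then show False using n1 n2 n3 n4 r(1) prime_dvd_mult_iff by metis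
    qed
    have "1 = Legendre (X^2) r" using legendre_sq[OF r(1) nX] by simp
    also have "\<dots> = Legendre ((1+u)*(1+v)*D*E) r" using legendre_cong[OF Kr] by simp
    also have "\<dots> = Legendre (1+u) r * Legendre (1+v) r * Legendre D r * Legendre E r"
      using legendre_mult[OF r(1) r(3)] by simp
    finally have pr: "Legendre (1+u) r * Legendre (1+v) r * Legendre D r * Legendre E r = 1" by simp
    show ?thesis using pr legendre_nz[OF n1] legendre_nz[OF n2] legendre_nz[OF n3] legendre_nz[OF n4]
      by auto
  qed
  have p2: "2 < p" using assms(1,3) prime_ge_2_int[of p] by (cases "p = 2") auto
  have q2: "2 < q" using assms(2,4) prime_ge_2_int[of q] by (cases "q = 2") auto
  have lp: "Legendre (1+v) p = Legendre (1+u) p * Legendre D p * Legendre E p"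
    using loc[OF assms(1) _ p2] assms(6) by simp
  have lq: "Legendre (1+v) q = Legendre (1+u) q * Legendre D q * Legendre E q"
    using loc[OF assms(2) _ q2] assms(6) by simp
  have J: "\<And>x. Jacobi x N = Legendre x p * Legendre x q"
    using assms(6) jacobi_pq[OF assms(1,2,5)] by simp
  have "Jacobi (1+v) N = Jacobi (1+u) N * Jacobi D N * Jacobi E N"
    unfolding J using lp lq by (simp add: algebra_simps)
  then show ?thesis unfolding E_def u_def v_def .
qed

end
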